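(* Let $r\in(0,1)$ and let $W$ be a positive random variable (cascade multiplier) with scaling exponents $\zeta_p$ defined by $\mathbb{E}[W^p]=r^{\zeta_p}$. (a) Let $k\ge1$ be an integer and suppose there is $\beta\in(0,1)$ such that, with $\delta_p=\zeta_{p+k}-\zeta_p$, the limit $\delta_\infty=\lim_{p\to\infty}\delta_p$ exists and is finite and $\delta_{p+k}=(1-\beta)\delta_\infty+\beta\delta_p$ for all $p\in\{0,k,2k,\dots\}$. Then, with $\gamma=\delta_\infty/k$ and $C=(\delta_0-\delta_\infty)/(1-\beta)$, $$\ln\mathbb{E}[W^p]=(\gamma\ln r)p+C\ln r\,(1-\beta^{p/k}),$$ the second term is $o(p)$, the Carleman sum $\sum_{p\ge1}(\mathbb{E}[W^{2p}])^{-1/(2p)}$ diverges, and $W$ is moment-determinate. (b) If the exponents are quadratic, $\zeta_p=c_1p+c_2p^2$, so that $\mathbb{E}[W^p]=\exp(\mu p+\sigma^2p^2/2)$ with $\sigma^2>0$, then the Carleman sum $\sum_{p\ge1}(\mathbb{E}[W^{2p}])^{-1/(2p)}$ converges and $W$ is moment-indeterminate: multiple distinct distributions share the same moments.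
   Context: $\ln$ denotes the natural logarithm. *)

theory Defs
  imports "HOL-Probability.Probability" "HOL-Library.Landau_Symbols"
begin

definition moment_determinate :: "real measure \<Rightarrow> bool" where
  "moment_determinate \<mu> \<longleftrightarrow>
     (\<forall>\<nu>::real measure. prob_space \<nu> \<and> sets \<nu> = sets borel \<and>
        (\<forall>n::nat. integrable \<nu> (\<lambda>x. x ^ n) \<and>
                  integral\<^sup>L \<nu> (\<lambda>x. x ^ n) = integral\<^sup>L \<mu> (\<lambda>x. x ^ n))
        \<longrightarrow> \<nu> = \<mu>)"

end

theory Submission
  imports Defs "HOL-Real_Asymp.Real_Asymp"
begin


lemma fact_lim0: "(\<lambda>j. (x::real)^(2*j) / fact (2*j)) \<longlonglongrightarrow> 0"
proof -
  have "(\<lambda>n. x^n / fact n) \<longlonglongrightarrow> 0"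
    using summable_LIMSEQ_zero[OF summable_exp[of x]] by (simp add: field_simps)
  moreover have "strict_mono (\<lambda>j::nat. 2*j)" by (auto simp: strict_mono_def)
  ultimately show ?thesis using LIMSEQ_subseq_LIMSEQ[of "\<lambda>n. x^n / fact n" 0 "\<lambda>j. 2*j"]
    by (simp add: o_def)
qed

lemma det_bounded:
  assumes M: "prob_space M" and Wm: "W \<in> borel_measurable M"
    and pos: "\<forall>x\<in>space M. W x > 0" and bnd: "AE x in M. W x \<le> R"
  shows "moment_determinate (distr M borel W)"
  unfolding moment_determinate_def
proof (intro allI impI)
  fix \<nu> :: "real measure"
  assume H: "prob_space \<nu> \<and> sets \<nu> = sets borel \<and>
        (\<forall>n::nat. integrable \<nu> (\<lambda>x. x ^ n) \<and>
                  integral\<^sup>L \<nu> (\<lambda>x. x ^ n) = integral\<^sup>L (distr M borel W) (\<lambda>x. x ^ n))"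
  define \<mu> where "\<mu> = distr M borel W"
  interpret M: prob_space M by (rule M)
  have posAE: "AE x in M. 0 < W x" using pos by (intro AE_I2) auto
  have pmu: "prob_space \<mu>" unfolding \<mu>_def by (rule M.prob_space_distr[OF Wm])
  interpret mu: real_distribution \<mu>
    using pmu unfolding real_distribution_def real_distribution_axioms_def \<mu>_def by simp
  interpret nu: real_distribution \<nu>
    using H unfolding real_distribution_def real_distribution_axioms_def by simp
  have intM: "integrable M (\<lambda>x. W x ^ n)" for n
  proof (rule M.integrable_const_bound[where B="R^n"])
    show "AE x in M. norm (W x ^ n) \<le> R ^ n"
      using bnd posAE by eventually_elim (simp add: power_abs power_mono)
  qed (use Wm in simp)
  have intmu: "integrable \<mu> (\<lambda>x. x ^ n)" for n
    unfolding \<mu>_def using intM by (subst integrable_distr_eq) (use Wm in auto)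
  have intmueq: "integral\<^sup>L \<mu> (\<lambda>x. x ^ n) = integral\<^sup>L M (\<lambda>x. W x ^ n)" for n
    unfolding \<mu>_def by (rule integral_distr) (use Wm in auto)
  have mombnd: "integral\<^sup>L \<mu> (\<lambda>x. x ^ n) \<le> R ^ n" for n
  proof -
    have "integral\<^sup>L M (\<lambda>x. W x ^ n) \<le> integral\<^sup>L M (\<lambda>x. R ^ n)"
    proof (rule integral_mono_AE)
      show "AE x in M. W x ^ n \<le> R ^ n"
        using bnd posAE by eventually_elim (simp add: power_mono)
    qed (use intM in auto)
    then show ?thesis using intmueq by (simp add: M.prob_space)
  qed
  have eqmom: "integral\<^sup>L \<nu> (\<lambda>x. x ^ n) = integral\<^sup>L \<mu> (\<lambda>x. x ^ n)" for n
    using H \<mu>_def by auto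
  have "char \<nu> = char \<mu>"
  proof
    fix t :: real
    define S where "S n = (\<Sum>k \<le> n. ((\<i> * complex_of_real t)^k / fact k) * complex_of_real (integral\<^sup>L \<mu> (\<lambda>x. x^k)))" for n
    have "cmod (char \<nu> t - char \<mu> t) \<le> 4 * ((\<bar>t\<bar>*R)^(2*j) / fact (2*j))" for j
    proof -
      have a1: "cmod (char \<nu> t - S (2*j)) \<le> (2*\<bar>t\<bar>^(2*j) / fact (2*j)) * integral\<^sup>L \<nu> (\<lambda>x. \<bar>x\<bar>^(2*j))"
        using nu.char_approx1[of "2*j" t] H unfolding S_def eqmom by auto
      have a2: "cmod (char \<mu> t - S (2*j)) \<le> (2*\<bar>t\<bar>^(2*j) / fact (2*j)) * integral\<^sup>L \<mu> (\<lambda>x. \<bar>x\<bar>^(2*j))"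
        using mu.char_approx1[of "2*j" t] intmu unfolding S_def by auto
      have e: "integral\<^sup>L \<nu> (\<lambda>x. \<bar>x\<bar>^(2*j)) \<le> R^(2*j)" "integral\<^sup>L \<mu> (\<lambda>x. \<bar>x\<bar>^(2*j)) \<le> R^(2*j)"
        using mombnd[of "2*j"] eqmom[of "2*j"] by (simp_all add: power_even_abs)
      have "cmod (char \<nu> t - char \<mu> t) \<le> cmod (char \<nu> t - S (2*j)) + cmod (char \<mu> t - S (2*j))"
        using norm_triangle_ineq4[of "char \<nu> t - S (2*j)" "char \<mu> t - S (2*j)"] by simp
      also have "\<dots> \<le> (2*\<bar>t\<bar>^(2*j) / fact (2*j)) * R^(2*j) + (2*\<bar>t\<bar>^(2*j) / fact (2*j)) * R^(2*j)"
      proof -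
        have c: "0 \<le> 2*\<bar>t\<bar>^(2*j) / fact (2*j)" by simp
        show ?thesis using a1 a2 mult_left_mono[OF e(1) c] mult_left_mono[OF e(2) c] by linarith
      qed
      also have "\<dots> = 4 * ((\<bar>t\<bar>*R)^(2*j) / fact (2*j))"
        by (simp add: power_mult_distrib field_simps)
      finally show ?thesis .
    qed
    moreover have "(\<lambda>j. 4 * ((\<bar>t\<bar>*R)^(2*j) / fact (2*j))) \<longlonglongrightarrow> 0"
      using tendsto_mult_right_zero[OF fact_lim0] by simp
    ultimately have "cmod (char \<nu> t - char \<mu> t) \<le> 0"
      by (intro LIMSEQ_le_const[of _ 0]) auto
    then show "char \<nu> t = char \<mu> t" by simp
  qed
  then show "\<nu> = distr M borel W"
    using Levy_uniqueness[OF nu.real_distribution_axioms mu.real_distribution_axioms] \<mu>_def by simp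
qed



lemma part_a:
  fixes M :: "'a measure" and W :: "'a \<Rightarrow> real" and r :: real
    and \<zeta> :: "real \<Rightarrow> real" and k :: nat and \<beta> dinf :: real
  assumes M: "prob_space M"
    and Wm: "W \<in> borel_measurable M"
    and pos: "\<forall>x\<in>space M. W x > 0"
    and r0: "0 < r" and r1: "r < 1"
    and hyp: "\<forall>p\<ge>0. integrable M (\<lambda>x. W x powr p) \<and>
                 prob_space.expectation M (\<lambda>x. W x powr p) = r powr \<zeta> p"
    and k: "k \<ge> 1" and b0: "0 < \<beta>" and b1: "\<beta> < 1"
    and rec: "\<forall>n::nat. \<zeta> (real ((n+1)*k) + real k) - \<zeta> (real ((n+1)*k))
                   = (1 - \<beta>) * dinf + \<beta> * (\<zeta> (real (n*k) + real k) - \<zeta> (real (n*k)))"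
  shows "(let \<gamma> = dinf / real k;
             C = ((\<zeta> (real k) - \<zeta> 0) - dinf) / (1 - \<beta>)
         in (\<forall>n::nat. ln (prob_space.expectation M (\<lambda>x. W x powr real (n*k)))
                = (\<gamma> * ln r) * real (n*k) + C * ln r * (1 - \<beta> powr (real (n*k) / real k))) \<and>
            (\<lambda>p::real. C * ln r * (1 - \<beta> powr (p / real k))) \<in> o[at_top](\<lambda>p. p) \<and>
            \<not> summable (\<lambda>p::nat. (prob_space.expectation M (\<lambda>x. W x ^ (2 * (p+1))))
                                     powr (- 1 / (2 * real (p+1)))) \<and>
            moment_determinate (distr M borel W))"
proof -
  interpret M: prob_space M by (rule M)
  define C where "C = ((\<zeta> (real k) - \<zeta> 0) - dinf) / (1 - \<beta>)"
  have E: "integral\<^sup>L M (\<lambda>x. W x powr p) = r powr \<zeta> p" if "p \<ge> 0" for p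
    using hyp that by auto
  have Epow: "integral\<^sup>L M (\<lambda>x. W x ^ m) = r powr \<zeta> (real m)" for m
  proof -
    have "integral\<^sup>L M (\<lambda>x. W x ^ m) = integral\<^sup>L M (\<lambda>x. W x powr real m)"
      by (rule Bochner_Integration.integral_cong) (use pos in \<open>auto simp: powr_realpow\<close>)
    then show ?thesis using E[of "real m"] by simp
  qed
  have z0: "\<zeta> 0 = 0"
  proof -
    have "r powr \<zeta> (real 0) = 1" using Epow[of 0] by (simp add: M.prob_space)
    then show ?thesis using r0 r1 by simp
  qed
  define D where "D n = \<zeta> (real (n*k) + real k) - \<zeta> (real (n*k))" for n
  have Dn: "D n = dinf + \<beta>^n * (D 0 - dinf)" for n
  proof (induction n)
    case 0 then show ?case by simp
  next
    case (Suc n)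
    have "D (Suc n) = (1 - \<beta>) * dinf + \<beta> * D n"
      using rec[rule_format, of n] unfolding D_def by simp
    then show ?case using Suc by (simp add: algebra_simps)
  qed
  have D0: "D 0 = \<zeta> (real k)" unfolding D_def using z0 by simp
  have Z: "\<zeta> (real (n*k)) = real n * dinf + C * (1 - \<beta>^n)" for n
  proof (induction n)
    case 0 then show ?case using z0 by simp
  next
    case (Suc n)
    have "\<zeta> (real (Suc n * k)) = \<zeta> (real (n*k)) + D n"
      unfolding D_def by (simp add: algebra_simps)
    also have "\<dots> = real n * dinf + C * (1 - \<beta>^n) + dinf + \<beta>^n * (\<zeta> (real k) - dinf)"
      using Suc Dn[of n] D0 by simp
    also have "\<dots> = real (Suc n) * dinf + C * (1 - \<beta>^(Suc n))"
      using b1 unfolding C_def z0 by (simp add: field_simps)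
    finally show ?case .
  qed
  have formula: "ln (integral\<^sup>L M (\<lambda>x. W x powr real (n*k)))
          = (dinf / real k * ln r) * real (n*k) + C * ln r * (1 - \<beta> powr (real (n*k) / real k))" for n
  proof -
    have "integral\<^sup>L M (\<lambda>x. W x powr real (n*k)) = r powr \<zeta> (real (n*k))" using E by simp
    then have L: "ln (integral\<^sup>L M (\<lambda>x. W x powr real (n*k))) = \<zeta> (real (n*k)) * ln r"
      using r0 by (simp add: ln_powr)
    have "real (n*k) / real k = real n" using k by simp
    then have B: "\<beta> powr (real (n*k) / real k) = \<beta>^n" using b0 by (simp add: powr_realpow)
    show ?thesis unfolding L B Z[of n] using k by (simp add: field_simps)
  qed
  have lo: "(\<lambda>p::real. C * ln r * (1 - \<beta> powr (p / real k))) \<in> o[at_top](\<lambda>p. p)"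
  proof (rule landau_o.big_small_trans)
    show "(\<lambda>p::real. C * ln r * (1 - \<beta> powr (p / real k))) \<in> O[at_top](\<lambda>_. 1)"
    proof (rule bigoI[where c="\<bar>C * ln r\<bar>"])
      show "\<forall>\<^sub>F p in at_top. norm (C * ln r * (1 - \<beta> powr (p / real k))) \<le> \<bar>C * ln r\<bar> * norm (1::real)"
        using eventually_ge_at_top[of "0::real"]
      proof eventually_elim
        case (elim p)
        have "\<beta> powr (p / real k) \<le> 1" using b0 b1 elim by (intro powr_le1) auto
        moreover have "0 \<le> \<beta> powr (p / real k)" by simp
        ultimately have "\<bar>1 - \<beta> powr (p / real k)\<bar> \<le> 1" by simp
        then show ?case by (simp add: abs_mult mult_left_le)
      qed
    qed
    show "(\<lambda>_. 1::real) \<in> o[at_top](\<lambda>p::real. p)" by real_asymp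
  qed
  define \<rho> where "\<rho> = r powr dinf"
  have rho: "\<rho> > 0" unfolding \<rho>_def using r0 by simp
  define A where "A = r powr (- \<bar>C\<bar>)"
  have Ebnd: "integral\<^sup>L M (\<lambda>x. W x ^ (n*k)) \<le> A * \<rho>^n" for n
  proof -
    have "integral\<^sup>L M (\<lambda>x. W x ^ (n*k)) = r powr (real n * dinf) * r powr (C * (1 - \<beta>^n))"
      using Epow[of "n*k"] Z[of n] by (simp add: powr_add)
    also have "r powr (real n * dinf) = \<rho>^n"
      unfolding \<rho>_def using r0 by (simp add: powr_powr[symmetric] powr_realpow[symmetric] mult.commute)
    also have "r powr (C * (1 - \<beta>^n)) \<le> A"
    proof -
      have "0 \<le> \<beta>^n" "\<beta>^n \<le> 1" using b0 b1 by (auto intro: power_le_one)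
      then have "\<bar>C * (1 - \<beta>^n)\<bar> \<le> \<bar>C\<bar>" by (simp add: abs_mult mult_left_le)
      then have "- \<bar>C\<bar> \<le> C * (1 - \<beta>^n)" by linarith
      then show ?thesis unfolding A_def using r0 r1 by (intro powr_mono') auto
    qed
    then have "\<rho>^n * r powr (C * (1 - \<beta>^n)) \<le> \<rho>^n * A"
      using rho by (intro mult_left_mono) auto
    finally show ?thesis by (simp add: mult.commute)
  qed
  define R where "R = (2 * \<rho>) powr (1 / real k)"
  have Rpos: "R > 0" unfolding R_def using rho by simp
  have Rk: "R ^ k = 2 * \<rho>"
  proof -
    have "R ^ k = R powr real k" using Rpos by (simp add: powr_realpow)
    also have "\<dots> = 2 * \<rho>" unfolding R_def using k rho by (simp add: powr_powr)
    finally show ?thesis .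
  qed
  have intp: "integrable M (\<lambda>x. W x ^ m)" for m
  proof -
    have "integrable M (\<lambda>x. W x powr real m)" using hyp by auto
    then show ?thesis
      by (rule Bochner_Integration.integrable_cong[THEN iffD1, rotated -1]) (use pos in \<open>auto simp: powr_realpow\<close>)
  qed
  have Wmeas[measurable]: "W \<in> borel_measurable M" by (rule Wm)
  have mb: "measure M {x\<in>space M. R \<le> W x} \<le> A * (1/2)^n" for n
  proof -
    have "measure M {x\<in>space M. R \<le> W x} \<le> measure M {x\<in>space M. R^(n*k) \<le> W x^(n*k)}"
      by (rule M.finite_measure_mono) (use Rpos in \<open>auto intro: power_mono\<close>)
    also have "\<dots> \<le> integral\<^sup>L M (\<lambda>x. W x ^ (n*k)) / R^(n*k)"
      by (rule integral_Markov_inequality_measure[where A="space M"]) (use intp pos Rpos in \<open>auto intro!: AE_I2\<close>)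
    also have "\<dots> \<le> A * \<rho>^n / R^(n*k)"
      using Ebnd[of n] Rpos by (intro divide_right_mono) auto
    also have "R^(n*k) = (2*\<rho>)^n" by (simp add: power_mult[symmetric] mult.commute Rk power_mult)
    also have "A * \<rho>^n / (2*\<rho>)^n = A * (1/2)^n" using rho by (simp add: power_mult_distrib field_simps)
    finally show ?thesis .
  qed
  have m0: "measure M {x\<in>space M. R \<le> W x} \<le> 0"
  proof (rule LIMSEQ_le_const)
    show "(\<lambda>n. A * (1/2)^n) \<longlonglongrightarrow> 0"
      by (intro tendsto_mult_right_zero LIMSEQ_power_zero) auto
    show "\<exists>N. \<forall>n\<ge>N. measure M {x\<in>space M. R \<le> W x} \<le> A * (1/2)^n" using mb by auto
  qed
  have bndAE: "AE x in M. W x \<le> R"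
  proof (rule AE_I')
    show "{x\<in>space M. R \<le> W x} \<in> null_sets M"
      using m0 by (auto simp: null_sets_def M.emeasure_eq_measure measure_nonneg order.antisym)
    show "{x\<in>space M. \<not> W x \<le> R} \<subseteq> {x\<in>space M. R \<le> W x}" by auto
  qed
  have posAE: "AE x in M. 0 < W x" using pos by (intro AE_I2) auto
  have det: "moment_determinate (distr M borel W)"
    by (rule det_bounded[OF M Wm pos bndAE])
  have term_ge: "1 / R \<le> integral\<^sup>L M (\<lambda>x. W x ^ (2 * (p+1))) powr (- 1 / (2 * real (p+1)))" for p
  proof -
    define m where "m = 2 * (p+1)"
    have Em_pos: "integral\<^sup>L M (\<lambda>x. W x ^ m) > 0" using Epow[of m] r0 by simp
    have Em_le: "integral\<^sup>L M (\<lambda>x. W x ^ m) \<le> R ^ m"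
    proof -
      have "integral\<^sup>L M (\<lambda>x. W x ^ m) \<le> integral\<^sup>L M (\<lambda>x. R ^ m)"
      proof (rule integral_mono_AE)
        show "AE x in M. W x ^ m \<le> R ^ m"
          using bndAE posAE by eventually_elim (auto intro: power_mono)
      qed (use intp in auto)
      then show ?thesis by (simp add: M.prob_space)
    qed
    have "(R ^ m) powr (- 1 / (2 * real (p+1))) \<le> integral\<^sup>L M (\<lambda>x. W x ^ m) powr (- 1 / (2 * real (p+1)))"
      by (rule powr_mono2') (use Em_pos Em_le in \<open>auto simp: divide_nonpos_pos\<close>)
    moreover have "(R ^ m) powr (- 1 / (2 * real (p+1))) = 1 / R"
    proof -
      have "(R ^ m) powr (- 1 / (2 * real (p+1))) = R powr (real m * (- 1 / (2 * real (p+1))))"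
        using Rpos by (simp add: powr_realpow[symmetric] powr_powr)
      also have "real m * (- 1 / (2 * real (p+1))) = -1" unfolding m_def by simp
      finally show ?thesis using Rpos by (simp add: powr_minus_divide)
    qed
    ultimately show ?thesis unfolding m_def by simp
  qed
  have nsum: "\<not> summable (\<lambda>p::nat. integral\<^sup>L M (\<lambda>x. W x ^ (2 * (p+1))) powr (- 1 / (2 * real (p+1))))"
  proof
    assume "summable (\<lambda>p::nat. integral\<^sup>L M (\<lambda>x. W x ^ (2 * (p+1))) powr (- 1 / (2 * real (p+1))))"
    then have "(\<lambda>p::nat. integral\<^sup>L M (\<lambda>x. W x ^ (2 * (p+1))) powr (- 1 / (2 * real (p+1)))) \<longlonglongrightarrow> 0"
      by (rule summable_LIMSEQ_zero)
    then have "1 / R \<le> 0" by (rule LIMSEQ_le_const) (use term_ge in auto)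
    then show False using Rpos by simp
  qed
  show ?thesis
    unfolding Let_def C_def[symmetric] using formula lo nsum det by simp
qed



definition gw :: "real \<Rightarrow> real \<Rightarrow> int \<Rightarrow> real" where
  "gw b t k = exp (- b * (real_of_int k + t)^2)"

definition dmeas :: "real \<Rightarrow> real \<Rightarrow> real \<Rightarrow> real measure" where
  "dmeas b m t = distr (density (count_space UNIV) (\<lambda>k::int. ennreal (gw b t k / infsetsum (gw b t) UNIV)))
      borel (\<lambda>k. exp (m + 2*b*(real_of_int k + t)))"

lemma int_abs_le_sq: "\<bar>k::int\<bar> \<le> k * k"
proof (cases "k = 0")
  case False
  then have "1 \<le> \<bar>k\<bar>" by simp
  then have "\<bar>k\<bar> * 1 \<le> \<bar>k\<bar> * \<bar>k\<bar>" by (intro mult_left_mono) auto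
  then show ?thesis by (simp add: abs_mult_self_eq)
qed simp

lemma exp_abs_summable:
  assumes "c > 0"
  shows "Infinite_Set_Sum.abs_summable_on (\<lambda>k::int. exp (- c * \<bar>real_of_int k\<bar>)) UNIV"
proof -
  have geo: "Infinite_Set_Sum.abs_summable_on (\<lambda>n::nat. exp (- c * \<bar>real_of_int (f n)\<bar>)) UNIV"
    if "\<And>n. \<bar>real_of_int (f n)\<bar> = real n" for f :: "nat \<Rightarrow> int"
  proof -
    have "summable (\<lambda>n::nat. exp (- c) ^ n)" using assms by (intro summable_geometric) auto
    moreover have "exp (- c) ^ n = norm (exp (- c * \<bar>real_of_int (f n)\<bar>))" for n
      using that[of n] exp_of_nat_mult[of n "-c"] by (simp add: mult.commute)
    ultimately show ?thesis by (simp add: abs_summable_on_nat_iff')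
  qed
  have inj1: "inj (\<lambda>n::nat. int n)" by (auto simp: inj_def)
  have inj2: "inj (\<lambda>n::nat. - int n)" by (auto simp: inj_def)
  have A: "Infinite_Set_Sum.abs_summable_on (\<lambda>k::int. exp (- c * \<bar>real_of_int k\<bar>)) (range (\<lambda>n::nat. int n))"
    using geo[of "\<lambda>n. int n"] abs_summable_on_reindex_iff[OF inj1, of "\<lambda>k::int. exp (- c * \<bar>real_of_int k\<bar>)"] by simp
  have B: "Infinite_Set_Sum.abs_summable_on (\<lambda>k::int. exp (- c * \<bar>real_of_int k\<bar>)) (range (\<lambda>n::nat. - int n))"
    using geo[of "\<lambda>n. - int n"] abs_summable_on_reindex_iff[OF inj2, of "\<lambda>k::int. exp (- c * \<bar>real_of_int k\<bar>)"] by simp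
  have U: "range (\<lambda>n::nat. int n) \<union> range (\<lambda>n::nat. - int n) = UNIV"
  proof (intro equalityI subsetI)
    fix k :: int
    show "k \<in> range (\<lambda>n::nat. int n) \<union> range (\<lambda>n::nat. - int n)"
    proof (cases "k \<ge> 0")
      case True then show ?thesis by (auto intro: image_eqI[of _ _ "nat k"])
    next
      case False then show ?thesis by (auto intro!: image_eqI[of _ _ "nat (-k)"])
    qed
  qed simp
  show ?thesis using abs_summable_on_union[OF A B] U by simp
qed

lemma gw_summable:
  assumes "b > 0"
  shows "Infinite_Set_Sum.abs_summable_on (gw b u) UNIV"
proof (rule abs_summable_on_comparison_test'[OF abs_summable_on_cmult_right[OF exp_abs_summable[of "b/2"]]])
  show "b/2 > 0" using assms by simp
  fix k :: int
  have sq1: "real_of_int k ^ 2 \<le> 2 * (real_of_int k + u)^2 + 2 * u^2"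
  proof -
    have "0 \<le> (real_of_int k + 2*u)^2" by simp
    then show ?thesis by (simp add: power2_eq_square algebra_simps)
  qed
  have sq2: "\<bar>real_of_int k\<bar> \<le> real_of_int k ^ 2"
    using int_abs_le_sq[of k] by (simp add: power2_eq_square) (metis of_int_abs of_int_le_iff of_int_mult)
  have "- b * (real_of_int k + u)^2 \<le> b * u^2 + (- (b/2) * \<bar>real_of_int k\<bar>)"
  proof -
    have h: "\<bar>real_of_int k\<bar> \<le> 2 * (real_of_int k + u)^2 + 2 * u^2" using sq1 sq2 by linarith
    have "(b/2) * \<bar>real_of_int k\<bar> \<le> (b/2) * (2 * (real_of_int k + u)^2 + 2 * u^2)"
      using assms h by (intro mult_left_mono) auto
    moreover have "(b/2) * (2 * (real_of_int k + u)^2 + 2 * u^2) = b * (real_of_int k + u)^2 + b * u^2"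
      by (simp add: algebra_simps)
    ultimately show ?thesis by linarith
  qed
  then have "exp (- b * (real_of_int k + u)^2) \<le> exp (b * u^2) * exp (- (b/2) * \<bar>real_of_int k\<bar>)"
    by (simp add: exp_add[symmetric])
  then show "norm (gw b u k) \<le> exp (b * u^2) * exp (- (b/2) * \<bar>real_of_int k\<bar>)"
    by (simp add: gw_def)
qed

lemma gw_pos: "gw b u k > 0" by (simp add: gw_def)

lemma gw_sum_pos:
  assumes "b > 0"
  shows "infsetsum (gw b u) UNIV > 0"
proof -
  have "infsetsum (gw b u) (UNIV - {0}) = infsetsum (gw b u) UNIV - infsetsum (gw b u) {0}"
    by (rule infsetsum_Diff[OF gw_summable[OF assms]]) simp
  moreover have "infsetsum (gw b u) (UNIV - {0}) \<ge> 0" by (intro infsetsum_nonneg) (simp add: less_imp_le[OF gw_pos])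
  ultimately show ?thesis using gw_pos[of b u 0] by simp
qed



lemma dmeas_basic:
  fixes b m t :: real
  assumes b: "b > 0"
  defines "S \<equiv> infsetsum (gw b t) UNIV"
  defines "P \<equiv> density (count_space (UNIV::int set)) (\<lambda>k. ennreal (gw b t k / S))"
  shows "dmeas b m t = distr P borel (\<lambda>k. exp (m + 2*b*(real_of_int k + t)))"
    and "S > 0" and "prob_space P" and "space P = UNIV"
    and "(\<lambda>k. exp (m + 2*b*(real_of_int k + t))) \<in> measurable P borel"
proof -
  show "dmeas b m t = distr P borel (\<lambda>k. exp (m + 2*b*(real_of_int k + t)))"
    unfolding dmeas_def P_def S_def ..
  show Spos: "S > 0" unfolding S_def by (rule gw_sum_pos[OF b])
  show sp: "space P = UNIV" unfolding P_def by simp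
  show "(\<lambda>k. exp (m + 2*b*(real_of_int k + t))) \<in> measurable P borel"
    unfolding P_def by simp
  have sw: "Infinite_Set_Sum.abs_summable_on (\<lambda>k. gw b t k / S) UNIV"
    using abs_summable_on_cmult_left[of "1/S" "gw b t" UNIV] gw_summable[OF b, of t] by simp
  have "emeasure P (space P) = (\<integral>\<^sup>+ k. ennreal (gw b t k / S) \<partial>count_space UNIV)"
    unfolding sp unfolding P_def by (subst emeasure_density) auto
  also have "\<dots> = ennreal (infsetsum (\<lambda>k. gw b t k / S) UNIV)"
    by (rule nn_integral_conv_infsetsum[OF sw]) (use Spos in \<open>auto intro!: divide_nonneg_pos less_imp_le[OF gw_pos]\<close>)
  also have "infsetsum (\<lambda>k. gw b t k / S) UNIV = 1"
    using Spos gw_summable[OF b, of t] by (subst infsetsum_cdiv) (auto simp: S_def)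
  finally show "prob_space P" by (intro prob_spaceI) simp
qed

lemma dmeas_moments:
  assumes b: "b > 0"
  shows "prob_space (dmeas b m t)" and "sets (dmeas b m t) = sets borel"
    and "integrable (dmeas b m t) (\<lambda>y. y ^ n)"
    and "integral\<^sup>L (dmeas b m t) (\<lambda>y. y ^ n) = exp (m * real n + b * real n ^ 2)"
proof -
  define S where "S = infsetsum (gw b t) UNIV"
  define P where "P = density (count_space (UNIV::int set)) (\<lambda>k. ennreal (gw b t k / S))"
  define x where "x k = exp (m + 2*b*(real_of_int k + t))" for k :: int
  note B = dmeas_basic(1)[OF b, where t=t and m=m, folded S_def, folded P_def, folded x_def]
     dmeas_basic(2)[OF b, where t=t, folded S_def]
     dmeas_basic(3)[OF b, where t=t, folded S_def, folded P_def]
     dmeas_basic(4)[OF b, where t=t, folded S_def, folded P_def]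
     dmeas_basic(5)[OF b, where t=t and m=m, folded S_def, folded P_def, folded x_def]
  interpret P: prob_space P by (rule B(3))
  show "prob_space (dmeas b m t)" unfolding B(1) by (rule P.prob_space_distr) (rule B(5))
  show "sets (dmeas b m t) = sets borel" unfolding B(1) by simp
  have key: "gw b t k / S * x k ^ n = (exp (m * real n + b * real n ^ 2) / S) * gw b (t - real n) k" for k
  proof -
    have "x k ^ n = exp (real n * (m + 2*b*(real_of_int k + t)))"
      unfolding x_def by (simp add: exp_of_nat_mult)
    then have "gw b t k / S * x k ^ n = exp (- b * (real_of_int k + t)^2 + real n * (m + 2*b*(real_of_int k + t))) / S"
      unfolding gw_def by (simp add: mult_exp_exp)
    also have "- b * (real_of_int k + t)^2 + real n * (m + 2*b*(real_of_int k + t))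
        = (m * real n + b * real n ^ 2) + (- b * (real_of_int k + (t - real n))^2)"
      by (simp add: power2_eq_square algebra_simps)
    finally show ?thesis unfolding gw_def by (simp add: mult_exp_exp)
  qed
  have sumk: "Infinite_Set_Sum.abs_summable_on (\<lambda>k. gw b t k / S * x k ^ n) UNIV"
    unfolding key using gw_summable[OF b, of "t - real n"] by (intro abs_summable_on_cmult_right) auto
  have nn: "AE k in count_space UNIV. 0 \<le> gw b t k / S"
    using B(2) by (intro AE_I2) (auto intro!: divide_nonneg_pos less_imp_le[OF gw_pos])
  have "integrable P (\<lambda>k. x k ^ n)"
    unfolding P_def
    by (subst integrable_density) (use nn sumk in \<open>auto simp: abs_summable_on_def\<close>)
  then show "integrable (dmeas b m t) (\<lambda>y. y ^ n)"
    unfolding B(1) by (subst integrable_distr_eq) (use B(5) in auto)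
  have "integral\<^sup>L (dmeas b m t) (\<lambda>y. y ^ n) = integral\<^sup>L P (\<lambda>k. x k ^ n)"
    unfolding B(1) by (rule integral_distr) (use B(5) in auto)
  also have "\<dots> = infsetsum (\<lambda>k. gw b t k / S * x k ^ n) UNIV"
    unfolding P_def infsetsum_def by (subst integral_density) (use nn in auto)
  also have "\<dots> = (exp (m * real n + b * real n ^ 2) / S) * infsetsum (gw b (t - real n)) UNIV"
    unfolding key by (rule infsetsum_cmult_right) (use gw_summable[OF b] in auto)
  also have "infsetsum (gw b (t - real n)) UNIV = S"
  proof -
    have bij: "bij_betw (\<lambda>k::int. k - int n) UNIV UNIV"
      by (rule bij_betwI[where g="\<lambda>k. k + int n"]) auto
    have "infsetsum (\<lambda>k. gw b t (k - int n)) UNIV = infsetsum (gw b t) UNIV"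
      by (rule infsetsum_reindex_bij_betw[OF bij])
    moreover have "gw b t (k - int n) = gw b (t - real n) k" for k
      unfolding gw_def by (simp add: algebra_simps)
    ultimately show ?thesis unfolding S_def by simp
  qed
  finally show "integral\<^sup>L (dmeas b m t) (\<lambda>y. y ^ n) = exp (m * real n + b * real n ^ 2)"
    using B(2) by simp
qed

lemma dmeas_point0:
  assumes b: "b > 0"
  shows "emeasure (dmeas b m 0) {exp m} \<noteq> 0"
proof -
  define S where "S = infsetsum (gw b 0) UNIV"
  define P where "P = density (count_space (UNIV::int set)) (\<lambda>k. ennreal (gw b 0 k / S))"
  note B = dmeas_basic(1)[OF b, where t=0 and m=m, folded S_def, folded P_def]
     dmeas_basic(2)[OF b, where t=0, folded S_def]
     dmeas_basic(3)[OF b, where t=0, folded S_def, folded P_def]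
     dmeas_basic(4)[OF b, where t=0, folded S_def, folded P_def]
     dmeas_basic(5)[OF b, where t=0 and m=m, folded S_def, folded P_def]
  have pre: "(\<lambda>k. exp (m + 2*b*(real_of_int k + 0))) -` {exp m} \<inter> space P = {0}"
    using B(4) b by auto
  have "emeasure (dmeas b m 0) {exp m} = emeasure P {0}"
    unfolding B(1) by (subst emeasure_distr) (use B(5) pre in auto)
  also have "\<dots> = ennreal (gw b 0 0 / S)"
    unfolding P_def by (subst emeasure_density) auto
  finally show ?thesis using B(2) gw_pos[of b 0 0] by simp
qed

lemma dmeas_point_half:
  assumes b: "b > 0"
  shows "emeasure (dmeas b m (1/2)) {exp m} = 0"
proof -
  define S where "S = infsetsum (gw b (1/2)) UNIV"
  define P where "P = density (count_space (UNIV::int set)) (\<lambda>k. ennreal (gw b (1/2) k / S))"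
  note B = dmeas_basic(1)[OF b, where t="1/2" and m=m, folded S_def, folded P_def]
     dmeas_basic(2)[OF b, where t="1/2", folded S_def]
     dmeas_basic(3)[OF b, where t="1/2", folded S_def, folded P_def]
     dmeas_basic(4)[OF b, where t="1/2", folded S_def, folded P_def]
     dmeas_basic(5)[OF b, where t="1/2" and m=m, folded S_def, folded P_def]
  have pre: "(\<lambda>k. exp (m + 2*b*(real_of_int k + 1/2))) -` {exp m} \<inter> space P = {}"
  proof -
    have nz: "real_of_int k + 1/2 \<noteq> 0" for k :: int
    proof
      assume "real_of_int k + 1/2 = 0"
      then have "real_of_int (2*k + 1) = 0" by simp
      then have "2*k + 1 = 0" by linarith
      then show False by presburger
    qed
    show ?thesis using nz b by auto
  qed
  show ?thesis
    unfolding B(1) by (subst emeasure_distr) (use B(5) pre in auto)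
qed



lemma part_b:
  fixes M :: "'a measure" and W :: "'a \<Rightarrow> real" and r :: real
    and \<zeta> :: "real \<Rightarrow> real" and c1 c2 :: real
  assumes M: "prob_space M"
    and Wm: "W \<in> borel_measurable M"
    and pos: "\<forall>x\<in>space M. W x > 0"
    and r0: "0 < r" and r1: "r < 1"
    and hyp: "\<forall>p\<ge>0. integrable M (\<lambda>x. W x powr p) \<and>
                 prob_space.expectation M (\<lambda>x. W x powr p) = r powr \<zeta> p"
    and zq: "\<forall>p\<ge>0. \<zeta> p = c1 * p + c2 * p^2" and cpos: "2 * c2 * ln r > 0"
  shows "summable (\<lambda>p::nat. (prob_space.expectation M (\<lambda>x. W x ^ (2 * (p+1))))
                             powr (- 1 / (2 * real (p+1)))) \<and>
        \<not> moment_determinate (distr M borel W)"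
proof -
  interpret M: prob_space M by (rule M)
  define b where "b = c2 * ln r"
  define mm where "mm = c1 * ln r"
  have b: "b > 0" unfolding b_def using cpos by simp
  have Epow: "integral\<^sup>L M (\<lambda>x. W x ^ n) = exp (mm * real n + b * real n ^ 2)" for n
  proof -
    have "integral\<^sup>L M (\<lambda>x. W x ^ n) = integral\<^sup>L M (\<lambda>x. W x powr real n)"
      by (rule Bochner_Integration.integral_cong) (use pos in \<open>auto simp: powr_realpow\<close>)
    also have "\<dots> = r powr \<zeta> (real n)" using hyp by auto
    also have "\<dots> = exp ((c1 * real n + c2 * real n ^ 2) * ln r)" using zq r0 by (simp add: powr_def)
    also have "(c1 * real n + c2 * real n ^ 2) * ln r = mm * real n + b * real n ^ 2"
      unfolding mm_def b_def by (simp add: algebra_simps)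
    finally show ?thesis .
  qed
  have termeq: "integral\<^sup>L M (\<lambda>x. W x ^ (2 * (p+1))) powr (- 1 / (2 * real (p+1)))
      = exp (- mm - 2*b) * exp (- 2*b) ^ p" for p
  proof -
    have "integral\<^sup>L M (\<lambda>x. W x ^ (2 * (p+1))) powr (- 1 / (2 * real (p+1)))
        = exp ((- 1 / (2 * real (p+1))) * (mm * real (2 * (p+1)) + b * real (2 * (p+1)) ^ 2))"
      unfolding Epow by (simp add: powr_def)
    also have "(- 1 / (2 * real (p+1))) * (mm * real (2 * (p+1)) + b * real (2 * (p+1)) ^ 2)
        = (- mm - 2*b) + real p * (- 2*b)"
      by (simp add: field_simps power2_eq_square)
    also have "exp ((- mm - 2*b) + real p * (- 2*b)) = exp (- mm - 2*b) * exp (- 2*b) ^ p"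
      by (simp only: exp_add exp_of_nat_mult)
    finally show ?thesis .
  qed
  have summ: "summable (\<lambda>p::nat. integral\<^sup>L M (\<lambda>x. W x ^ (2 * (p+1))) powr (- 1 / (2 * real (p+1))))"
    unfolding termeq using b by (intro summable_mult summable_geometric) auto
  have ndet: "\<not> moment_determinate (distr M borel W)"
  proof
    assume det: "moment_determinate (distr M borel W)"
    have mu_mom: "integral\<^sup>L (distr M borel W) (\<lambda>x. x ^ n) = exp (mm * real n + b * real n ^ 2)" for n
      using Epow[of n] by (subst integral_distr) (use Wm in auto)
    have eq: "dmeas b mm t = distr M borel W" for t
      using det unfolding moment_determinate_def
      using dmeas_moments[OF b, of mm t] mu_mom by auto
    have "emeasure (dmeas b mm 0) {exp mm} = emeasure (dmeas b mm (1/2)) {exp mm}"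
      using eq[of 0] eq[of "1/2"] by simp
    then show False using dmeas_point0[OF b, of mm] dmeas_point_half[OF b, of mm] by simp
  qed
  show ?thesis using summ ndet by simp
qed


theorem mainTheorem8:
  fixes M :: "'a measure" and W :: "'a \<Rightarrow> real" and r :: real
    and \<zeta> :: "real \<Rightarrow> real"
  assumes "prob_space M"
    and "W \<in> borel_measurable M"
    and "\<forall>x\<in>space M. W x > 0"
    and "0 < r" and "r < 1"
    and "\<forall>p\<ge>0. integrable M (\<lambda>x. W x powr p) \<and>
                 prob_space.expectation M (\<lambda>x. W x powr p) = r powr \<zeta> p"
  shows
    "(\<forall>(k::nat) \<beta> dinf.
        (k \<ge> 1 \<and> 0 < \<beta> \<and> \<beta> < 1 \<and>
         ((\<lambda>p. \<zeta> (p + real k) - \<zeta> p) \<longlongrightarrow> dinf) at_top \<and>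
         (\<forall>n::nat. \<zeta> (real ((n+1)*k) + real k) - \<zeta> (real ((n+1)*k))
                   = (1 - \<beta>) * dinf + \<beta> * (\<zeta> (real (n*k) + real k) - \<zeta> (real (n*k)))))
        \<longrightarrow>
        (let \<gamma> = dinf / real k;
             C = ((\<zeta> (real k) - \<zeta> 0) - dinf) / (1 - \<beta>)
         in (\<forall>n::nat. ln (prob_space.expectation M (\<lambda>x. W x powr real (n*k)))
                = (\<gamma> * ln r) * real (n*k) + C * ln r * (1 - \<beta> powr (real (n*k) / real k))) \<and>
            (\<lambda>p::real. C * ln r * (1 - \<beta> powr (p / real k))) \<in> o[at_top](\<lambda>p. p) \<and>
            \<not> summable (\<lambda>p::nat. (prob_space.expectation M (\<lambda>x. W x ^ (2 * (p+1))))
                                     powr (- 1 / (2 * real (p+1)))) \<and>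
            moment_determinate (distr M borel W)))
     \<and>
     (\<forall>c\<^sub>1 c\<^sub>2 :: real.
        ((\<forall>p\<ge>0. \<zeta> p = c\<^sub>1 * p + c\<^sub>2 * p^2) \<and> 2 * c\<^sub>2 * ln r > 0)
        \<longrightarrow>
        summable (\<lambda>p::nat. (prob_space.expectation M (\<lambda>x. W x ^ (2 * (p+1))))
                             powr (- 1 / (2 * real (p+1)))) \<and>
        \<not> moment_determinate (distr M borel W))"
  proof (intro conjI allI impI)
  fix k :: nat and \<beta> dinf :: real
  assume H: "k \<ge> 1 \<and> 0 < \<beta> \<and> \<beta> < 1 \<and>
         ((\<lambda>p. \<zeta> (p + real k) - \<zeta> p) \<longlongrightarrow> dinf) at_top \<and>
         (\<forall>n::nat. \<zeta> (real ((n+1)*k) + real k) - \<zeta> (real ((n+1)*k))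
                   = (1 - \<beta>) * dinf + \<beta> * (\<zeta> (real (n*k) + real k) - \<zeta> (real (n*k))))"
  show "let \<gamma> = dinf / real k;
             C = ((\<zeta> (real k) - \<zeta> 0) - dinf) / (1 - \<beta>)
         in (\<forall>n::nat. ln (prob_space.expectation M (\<lambda>x. W x powr real (n*k)))
                = (\<gamma> * ln r) * real (n*k) + C * ln r * (1 - \<beta> powr (real (n*k) / real k))) \<and>
            (\<lambda>p::real. C * ln r * (1 - \<beta> powr (p / real k))) \<in> o[at_top](\<lambda>p. p) \<and>
            \<not> summable (\<lambda>p::nat. (prob_space.expectation M (\<lambda>x. W x ^ (2 * (p+1))))
                                     powr (- 1 / (2 * real (p+1)))) \<and>
            moment_determinate (distr M borel W)"
    using part_a[OF assms] H by blast
next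
  fix c\<^sub>1 c\<^sub>2 :: real
  assume H: "(\<forall>p\<ge>0. \<zeta> p = c\<^sub>1 * p + c\<^sub>2 * p^2) \<and> 2 * c\<^sub>2 * ln r > 0"
  have "summable (\<lambda>p::nat. (prob_space.expectation M (\<lambda>x. W x ^ (2 * (p+1))))
                             powr (- 1 / (2 * real (p+1)))) \<and>
        \<not> moment_determinate (distr M borel W)"
    using part_b[OF assms, of c\<^sub>1 c\<^sub>2] H by blast
  then show "summable (\<lambda>p::nat. (prob_space.expectation M (\<lambda>x. W x ^ (2 * (p+1))))
                             powr (- 1 / (2 * real (p+1))))"
    and "\<not> moment_determinate (distr M borel W)" by auto
qed

end
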